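(* For every graph $\mathcal{G}$ there exists a scattered, locally quasi-compact topological space $X$, which is neither $\mathbf{T}_1$ nor zero-dimensional, such that $\mathrm{Homeo}(X)$ is isomorphic as a topological group to $\mathrm{Aut}(\mathcal{G})$.
   Context: A graph is a pair $(V,E)$ with $E$ a nonempty set of 2-element subsets of $V$ (simple, non-oriented). $\mathrm{Aut}(\mathcal{G})$ is the subgroup of $\mathrm{Sym}(V)$ preserving $E$, with the topology of pointwise convergence on the discrete set $V$. A space is scattered if every nonempty subset has a point isolated in that subset; locally quasi-compact if each point has a quasi-compact neighbourhood (no separation assumed); $\mathbf{T}_1$ if singletons are closed; zero-dimensional if it has a basis of clopen sets. For scattered $X$, $\mathrm{Homeo}(X)$ carries the topology of pointwise convergence on $X$. *)

theory Defs
  imports "HOL-Analysis.Analysis"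
begin

definition is_graph :: "'v set \<Rightarrow> 'v set set \<Rightarrow> bool" where
  "is_graph V E \<longleftrightarrow> E \<noteq> {} \<and> (\<forall>e\<in>E. e \<subseteq> V \<and> card e = 2)"

definition sym_group :: "'a set \<Rightarrow> ('a \<Rightarrow> 'a) set" where
  "sym_group S = {f. bij_betw f S S \<and> (\<forall>x. x \<notin> S \<longrightarrow> f x = x)}"

definition graph_aut :: "'v set \<Rightarrow> 'v set set \<Rightarrow> ('v \<Rightarrow> 'v) set" where
  "graph_aut V E = {f \<in> sym_group V. (\<lambda>e. f ` e) ` E = E}"

definition homeo_group :: "'a topology \<Rightarrow> ('a \<Rightarrow> 'a) set" where
  "homeo_group X = {f. homeomorphic_map X X f \<and> (\<forall>x. x \<notin> topspace X \<longrightarrow> f x = x)}"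

definition pointwise_topology :: "'a set \<Rightarrow> ('a \<Rightarrow> 'a) set \<Rightarrow> ('a \<Rightarrow> 'a) topology" where
  "pointwise_topology S G = topology (\<lambda>U. U \<subseteq> G \<and>
     (\<forall>g\<in>U. \<exists>F. finite F \<and> F \<subseteq> S \<and> {h\<in>G. \<forall>x\<in>F. h x = g x} \<subseteq> U))"

definition top_group_iso ::
  "('a \<Rightarrow> 'a) set \<Rightarrow> ('a \<Rightarrow> 'a) topology \<Rightarrow> ('b \<Rightarrow> 'b) set \<Rightarrow> ('b \<Rightarrow> 'b) topology
     \<Rightarrow> (('a \<Rightarrow> 'a) \<Rightarrow> ('b \<Rightarrow> 'b)) \<Rightarrow> bool" where
  "top_group_iso G TG H TH \<phi> \<longleftrightarrow>
     bij_betw \<phi> G H \<and> (\<forall>f\<in>G. \<forall>g\<in>G. \<phi> (f \<circ> g) = \<phi> f \<circ> \<phi> g) \<and>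
     homeomorphic_map TG TH \<phi>"

definition scattered_space :: "'a topology \<Rightarrow> bool" where
  "scattered_space X \<longleftrightarrow> (\<forall>S. S \<subseteq> topspace X \<and> S \<noteq> {} \<longrightarrow>
     (\<exists>x\<in>S. \<exists>U. openin X U \<and> U \<inter> S = {x}))"

text \<open>Locally quasi-compact: each point has a (quasi-)compact neighbourhood
  (compactin carries no separation axiom).\<close>
definition locally_quasi_compact :: "'a topology \<Rightarrow> bool" where
  "locally_quasi_compact X \<longleftrightarrow> (\<forall>x\<in>topspace X. \<exists>N U.
     openin X U \<and> x \<in> U \<and> U \<subseteq> N \<and> compactin X N)"

definition singletons_closed :: "'a topology \<Rightarrow> bool" where
  "singletons_closed X \<longleftrightarrow> (\<forall>x\<in>topspace X. closedin X {x})"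

definition zero_dimensional :: "'a topology \<Rightarrow> bool" where
  "zero_dimensional X \<longleftrightarrow> (\<exists>\<B>. (\<forall>B\<in>\<B>. openin X B \<and> closedin X B) \<and>
     (\<forall>U. openin X U \<longrightarrow> (\<exists>\<U>. \<U> \<subseteq> \<B> \<and> \<Union>\<U> = U)))"


lemma istopology_pointwise:
  "istopology (\<lambda>U. U \<subseteq> G \<and>
     (\<forall>g\<in>U. \<exists>F. finite F \<and> F \<subseteq> S \<and> {h\<in>G. \<forall>x\<in>F. h x = g x} \<subseteq> U))"
  unfolding istopology_def
proof (rule conjI; intro allI impI)
  fix U V :: "('a \<Rightarrow> 'b) set"
  assume a: "U \<subseteq> G \<and> (\<forall>g\<in>U. \<exists>F. finite F \<and> F \<subseteq> S \<and> {h\<in>G. \<forall>x\<in>F. h x = g x} \<subseteq> U)"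
     and b: "V \<subseteq> G \<and> (\<forall>g\<in>V. \<exists>F. finite F \<and> F \<subseteq> S \<and> {h\<in>G. \<forall>x\<in>F. h x = g x} \<subseteq> V)"
  show "U \<inter> V \<subseteq> G \<and> (\<forall>g\<in>U \<inter> V. \<exists>F. finite F \<and> F \<subseteq> S \<and> {h\<in>G. \<forall>x\<in>F. h x = g x} \<subseteq> U \<inter> V)"
  proof (intro conjI ballI)
    show "U \<inter> V \<subseteq> G" using a by blast
  next
    fix g assume g: "g \<in> U \<inter> V"
    obtain F1 where "finite F1" "F1 \<subseteq> S" "{h\<in>G. \<forall>x\<in>F1. h x = g x} \<subseteq> U"
      using a g by blast
    moreover obtain F2 where "finite F2" "F2 \<subseteq> S" "{h\<in>G. \<forall>x\<in>F2. h x = g x} \<subseteq> V"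
      using b g by blast
    ultimately show "\<exists>F. finite F \<and> F \<subseteq> S \<and> {h\<in>G. \<forall>x\<in>F. h x = g x} \<subseteq> U \<inter> V"
      by (intro exI[of _ "F1 \<union> F2"]) auto
  qed
next
  fix K :: "('a \<Rightarrow> 'b) set set"
  assume "\<forall>U\<in>K. U \<subseteq> G \<and> (\<forall>g\<in>U. \<exists>F. finite F \<and> F \<subseteq> S \<and> {h\<in>G. \<forall>x\<in>F. h x = g x} \<subseteq> U)"
  then show "\<Union>K \<subseteq> G \<and> (\<forall>g\<in>\<Union>K. \<exists>F. finite F \<and> F \<subseteq> S \<and> {h\<in>G. \<forall>x\<in>F. h x = g x} \<subseteq> \<Union>K)"
    by (smt (verit, best) UnionE Union_upper order_trans Sup_least)
qed

end

theory Submission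
  imports Defs
begin

definition RR :: "('v set \<times> nat) \<Rightarrow> ('v set \<times> nat) \<Rightarrow> bool" where
  "RR a b \<longleftrightarrow> fst a \<subseteq> fst b \<and> snd a \<le> snd b"

definition alex :: "('v set \<times> nat) set \<Rightarrow> ('v set \<times> nat) topology" where
  "alex P = topology (\<lambda>U. U \<subseteq> P \<and> (\<forall>a\<in>U. \<forall>b\<in>P. RR a b \<longrightarrow> b \<in> U))"

lemma istopology_alex: "istopology (\<lambda>U. U \<subseteq> P \<and> (\<forall>a\<in>U. \<forall>b\<in>P. RR a b \<longrightarrow> b \<in> U))"
  unfolding istopology_def by blast

lemma openin_alex: "openin (alex P) U \<longleftrightarrow> U \<subseteq> P \<and> (\<forall>a\<in>U. \<forall>b\<in>P. RR a b \<longrightarrow> b \<in> U)"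
  unfolding alex_def by (simp add: istopology_alex)

lemma topspace_alex: "topspace (alex P) = P"
  unfolding topspace_def openin_alex by blast

lemma RR_refl: "RR a a" by (simp add: RR_def)
lemma RR_trans: "RR a b \<Longrightarrow> RR b c \<Longrightarrow> RR a c" by (auto simp add: RR_def)

lemma up_open: "openin (alex P) {b\<in>P. RR a b}"
  unfolding openin_alex using RR_trans by blast

lemma cont_alex: "continuous_map (alex P) (alex P) f \<longleftrightarrow>
   (\<forall>a\<in>P. f a \<in> P) \<and> (\<forall>a\<in>P. \<forall>b\<in>P. RR a b \<longrightarrow> RR (f a) (f b))"
proof
  assume c: "continuous_map (alex P) (alex P) f"
  then have fP: "\<forall>a\<in>P. f a \<in> P" by (auto simp: continuous_map topspace_alex)
  moreover have "RR (f a) (f b)" if "a\<in>P" "b\<in>P" "RR a b" for a b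
  proof -
    have "openin (alex P) {x \<in> topspace (alex P). f x \<in> {y\<in>P. RR (f a) y}}"
      using c up_open unfolding continuous_map by blast
    then have "\<forall>x\<in>{x \<in> P. f x \<in> {y\<in>P. RR (f a) y}}. \<forall>y\<in>P. RR x y \<longrightarrow> y \<in> {x \<in> P. f x \<in> {y\<in>P. RR (f a) y}}"
      unfolding openin_alex topspace_alex by blast
    then show ?thesis using that fP RR_refl by blast
  qed
  ultimately show "(\<forall>a\<in>P. f a \<in> P) \<and> (\<forall>a\<in>P. \<forall>b\<in>P. RR a b \<longrightarrow> RR (f a) (f b))" by blast
next
  assume "(\<forall>a\<in>P. f a \<in> P) \<and> (\<forall>a\<in>P. \<forall>b\<in>P. RR a b \<longrightarrow> RR (f a) (f b))"
  then show "continuous_map (alex P) (alex P) f"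
    unfolding continuous_map topspace_alex openin_alex by blast
qed

lemma homeo_alex: "homeomorphic_map (alex P) (alex P) h \<longleftrightarrow>
   bij_betw h P P \<and> (\<forall>a\<in>P. \<forall>b\<in>P. RR (h a) (h b) \<longleftrightarrow> RR a b)"
proof
  assume "homeomorphic_map (alex P) (alex P) h"
  then obtain g where g: "homeomorphic_maps (alex P) (alex P) h g"
    using homeomorphic_map_maps by blast
  then have ch: "continuous_map (alex P) (alex P) h" and cg: "continuous_map (alex P) (alex P) g"
    and gh: "\<forall>x\<in>P. g (h x) = x" and hg: "\<forall>x\<in>P. h (g x) = x"
    unfolding homeomorphic_maps_def topspace_alex by auto
  have b: "bij_betw h P P"
    by (rule bij_betw_byWitness[where f'=g]) (use gh hg ch cg in \<open>auto simp: cont_alex\<close>)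
  have "RR a b" if "a\<in>P" "b\<in>P" "RR (h a) (h b)" for a b
  proof -
    have "h a \<in> P" "h b \<in> P" using ch that unfolding cont_alex by auto
    then have "RR (g (h a)) (g (h b))" using cg that(3) unfolding cont_alex by blast
    then show ?thesis using gh that(1,2) by simp
  qed
  then show "bij_betw h P P \<and> (\<forall>a\<in>P. \<forall>b\<in>P. RR (h a) (h b) \<longleftrightarrow> RR a b)"
    using b ch unfolding cont_alex by blast
next
  assume a: "bij_betw h P P \<and> (\<forall>a\<in>P. \<forall>b\<in>P. RR (h a) (h b) \<longleftrightarrow> RR a b)"
  define g where "g = inv_into P h"
  have gP: "\<forall>x\<in>P. g x \<in> P" and hg: "\<forall>x\<in>P. h (g x) = x" and gh: "\<forall>x\<in>P. g (h x) = x"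
    using a unfolding g_def bij_betw_def
    by (auto simp: inv_into_into f_inv_into_f inv_into_f_f)
  have hP: "\<forall>x\<in>P. h x \<in> P" using a bij_betwE by blast
  have "homeomorphic_maps (alex P) (alex P) h g"
    unfolding homeomorphic_maps_def topspace_alex cont_alex
  proof (intro conjI ballI impI)
    fix x y assume xy: "x \<in> P" "y \<in> P" "RR x y"
    have "RR (h (g x)) (h (g y))" using xy hg by simp
    then show "RR (g x) (g y)" using a gP xy by blast
  qed (use a gP hg gh hP in auto)
  then show "homeomorphic_map (alex P) (alex P) h"
    using homeomorphic_map_maps by blast
qed

lemma openin_pointwise: "openin (pointwise_topology S G) U \<longleftrightarrow> U \<subseteq> G \<and>
     (\<forall>g\<in>U. \<exists>F. finite F \<and> F \<subseteq> S \<and> {h\<in>G. \<forall>x\<in>F. h x = g x} \<subseteq> U)"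
  unfolding pointwise_topology_def by (simp add: istopology_pointwise)

lemma topspace_pointwise: "topspace (pointwise_topology S G) = G"
proof -
  have "openin (pointwise_topology S G) G" unfolding openin_pointwise by blast
  then show ?thesis unfolding topspace_def openin_pointwise by blast
qed

lemma cont_pointwise:
  assumes "\<forall>g\<in>G. \<psi> g \<in> H"
    and "\<forall>g\<in>G. \<forall>y\<in>T. \<exists>F. finite F \<and> F \<subseteq> S \<and> (\<forall>h\<in>G. (\<forall>x\<in>F. h x = g x) \<longrightarrow> \<psi> h y = \<psi> g y)"
  shows "continuous_map (pointwise_topology S G) (pointwise_topology T H) \<psi>"
  unfolding continuous_map topspace_pointwise
proof (intro conjI allI impI)
  show "\<psi> ` G \<subseteq> H" using assms(1) by blast
  fix U assume U: "openin (pointwise_topology T H) U"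
  show "openin (pointwise_topology S G) {x \<in> G. \<psi> x \<in> U}"
    unfolding openin_pointwise
  proof (intro conjI ballI)
    fix g assume g: "g \<in> {x \<in> G. \<psi> x \<in> U}"
    then obtain F' where F': "finite F'" "F' \<subseteq> T" "{h\<in>H. \<forall>x\<in>F'. h x = \<psi> g x} \<subseteq> U"
      using U unfolding openin_pointwise by blast
    have "\<forall>y\<in>F'. \<exists>F. finite F \<and> F \<subseteq> S \<and> (\<forall>h\<in>G. (\<forall>x\<in>F. h x = g x) \<longrightarrow> \<psi> h y = \<psi> g y)"
      using assms(2) g F'(2) by blast
    then obtain FF where FF: "\<forall>y\<in>F'. finite (FF y) \<and> FF y \<subseteq> S \<and> (\<forall>h\<in>G. (\<forall>x\<in>FF y. h x = g x) \<longrightarrow> \<psi> h y = \<psi> g y)"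
      by metis
    show "\<exists>F. finite F \<and> F \<subseteq> S \<and> {h \<in> G. \<forall>x\<in>F. h x = g x} \<subseteq> {x \<in> G. \<psi> x \<in> U}"
    proof (intro exI conjI)
      show "finite (\<Union>y\<in>F'. FF y)" using FF F'(1) by blast
      show "(\<Union>y\<in>F'. FF y) \<subseteq> S" using FF by blast
      show "{h \<in> G. \<forall>x\<in>(\<Union>y\<in>F'. FF y). h x = g x} \<subseteq> {x \<in> G. \<psi> x \<in> U}"
      proof
        fix h assume h: "h \<in> {h \<in> G. \<forall>x\<in>(\<Union>y\<in>F'. FF y). h x = g x}"
        then have "\<forall>y\<in>F'. \<psi> h y = \<psi> g y" using FF by auto
        moreover have "\<psi> h \<in> H" using h assms(1) by auto
        ultimately show "h \<in> {x \<in> G. \<psi> x \<in> U}" using F'(3) h by auto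
      qed
    qed
  qed blast
qed


lemma homeo_group_alex: "homeo_group (alex P) = {h. bij_betw h P P \<and>
   (\<forall>a\<in>P. \<forall>b\<in>P. RR (h a) (h b) \<longleftrightarrow> RR a b) \<and> (\<forall>x. x \<notin> P \<longrightarrow> h x = x)}"
  unfolding homeo_group_def homeo_alex topspace_alex by blast

lemma inj_on_img_sub: "inj_on f C \<Longrightarrow> A \<subseteq> C \<Longrightarrow> B \<subseteq> C \<Longrightarrow> f ` A \<subseteq> f ` B \<longleftrightarrow> A \<subseteq> B"
  by (metis inj_on_image_mem_iff image_eqI image_mono subset_iff)

definition PP :: "'v set \<Rightarrow> 'v set set \<Rightarrow> ('v set \<times> nat) set" where
  "PP V E = (\<lambda>v. ({v}, 0::nat)) ` V \<union> (\<lambda>e. (e, 1)) ` E"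

definition psi :: "'v set \<Rightarrow> 'v set set \<Rightarrow> ('v \<Rightarrow> 'v) \<Rightarrow> ('v set \<times> nat \<Rightarrow> 'v set \<times> nat)" where
  "psi V E f = (\<lambda>y. if y \<in> PP V E then (f ` fst y, snd y) else y)"

definition phi :: "'v set \<Rightarrow> ('v set \<times> nat \<Rightarrow> 'v set \<times> nat) \<Rightarrow> ('v \<Rightarrow> 'v)" where
  "phi V h = (\<lambda>v. if v \<in> V then the_elem (fst (h ({v}, 0))) else v)"

lemma PP_cases:
  assumes "a \<in> PP V E"
  obtains v where "v \<in> V" "a = ({v}, 0)" | e where "e \<in> E" "a = (e, 1)"
  using assms unfolding PP_def by blast

lemma PP_vert: "v \<in> V \<Longrightarrow> ({v}, 0) \<in> PP V E" unfolding PP_def by blast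
lemma PP_edge: "e \<in> E \<Longrightarrow> (e, 1) \<in> PP V E" unfolding PP_def by blast

context
  fixes V :: "'v set" and E :: "'v set set"
  assumes G: "is_graph V E"
begin

lemma edge_props: "e \<in> E \<Longrightarrow> e \<subseteq> V \<and> finite e \<and> (\<exists>x y. e = {x, y} \<and> x \<noteq> y)"
  using G unfolding is_graph_def by (metis card_2_iff finite.emptyI finite.insertI)

lemma edge_ne: "e \<in> E \<Longrightarrow> \<exists>u. u \<in> e"
  using edge_props by blast

context
  fixes h
  assumes hb: "bij_betw h (PP V E) (PP V E)"
    and ho: "\<forall>a\<in>PP V E. \<forall>b\<in>PP V E. RR (h a) (h b) \<longleftrightarrow> RR a b"
begin

lemma h_in: "a \<in> PP V E \<Longrightarrow> h a \<in> PP V E" using hb bij_betwE by blast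

lemma h_surj: "b \<in> PP V E \<Longrightarrow> \<exists>c\<in>PP V E. h c = b"
  by (metis bij_betw_imp_surj_on hb imageE)

lemma h_inj: "a \<in> PP V E \<Longrightarrow> b \<in> PP V E \<Longrightarrow> h a = h b \<Longrightarrow> a = b"
  using hb unfolding bij_betw_def inj_on_def by blast

lemma L1: assumes v: "v \<in> V" shows "\<exists>w\<in>V. h ({v}, 0) = ({w}, 0)"
proof -
  have "h ({v}, 0) \<in> PP V E" using h_in[OF PP_vert[OF v]] .
  then show ?thesis
  proof (cases rule: PP_cases)
    case (1 w) then show ?thesis by blast
  next
    case (2 e)
    obtain u where u: "u \<in> e" using edge_ne 2 by blast
    have uV: "u \<in> V" using edge_props 2 u by blast
    obtain c where c: "c \<in> PP V E" "h c = ({u}, 0)" using h_surj PP_vert[OF uV] by blast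
    have "RR (h c) (h ({v}, 0))" using c 2 u by (simp add: RR_def)
    then have r: "RR c ({v}, 0)" using ho[rule_format, OF c(1) PP_vert[OF v]] by simp
    from c(1) show ?thesis
    proof (cases rule: PP_cases)
      case (1 x)
      then have "c = ({v}, 0)" using r by (simp add: RR_def)
      then show ?thesis using c 2 by simp
    next
      case (2 e'') then show ?thesis using r by (simp add: RR_def)
    qed
  qed
qed

lemma L1': assumes v: "v \<in> V" shows "h ({v}, 0) = ({phi V h v}, 0) \<and> phi V h v \<in> V"
  using L1[OF v] v unfolding phi_def by auto

lemma L2: assumes e: "e \<in> E" shows "\<exists>e'\<in>E. h (e, 1) = (e', 1)"
proof -
  have "h (e, 1) \<in> PP V E" using h_in[OF PP_edge[OF e]] .
  then show ?thesis
  proof (cases rule: PP_cases)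
    case (2 e') then show ?thesis by blast
  next
    case (1 w)
    obtain u where u: "u \<in> e" using edge_ne e by blast
    have uV: "u \<in> V" using edge_props e u by blast
    have "RR ({u}, 0) (e, 1)" using u by (simp add: RR_def)
    then have "RR (h ({u}, 0)) (h (e, 1))" using ho[rule_format, OF PP_vert[OF uV] PP_edge[OF e]] by simp
    moreover obtain u' where "h ({u}, 0) = ({u'}, 0)" using L1[OF uV] by blast
    ultimately have "h ({u}, 0) = h (e, 1)" using 1 by (simp add: RR_def)
    then have "({u}, 0::nat) = (e, 1)" using h_inj[OF PP_vert[OF uV] PP_edge[OF e]] by simp
    then show ?thesis by simp
  qed
qed

lemma L3: assumes e: "e \<in> E" shows "h (e, 1) = (phi V h ` e, 1)"
proof -
  obtain e' where e': "e' \<in> E" "h (e, 1) = (e', 1)" using L2[OF e] by blast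
  have "phi V h ` e \<subseteq> e'"
  proof
    fix w assume "w \<in> phi V h ` e"
    then obtain u where u: "u \<in> e" "w = phi V h u" by blast
    have uV: "u \<in> V" using edge_props e u by blast
    have "RR ({u}, 0) (e, 1)" using u by (simp add: RR_def)
    then have "RR (h ({u}, 0)) (h (e, 1))" using ho[rule_format, OF PP_vert[OF uV] PP_edge[OF e]] by simp
    then show "w \<in> e'" using L1'[OF uV] e' u by (simp add: RR_def)
  qed
  moreover have "e' \<subseteq> phi V h ` e"
  proof
    fix w assume w: "w \<in> e'"
    have wV: "w \<in> V" using edge_props e' w by blast
    obtain c where c: "c \<in> PP V E" "h c = ({w}, 0)" using h_surj PP_vert[OF wV] by blast
    have "RR (h c) (h (e, 1))" using c e' w by (simp add: RR_def)
    then have r: "RR c (e, 1)" using ho[rule_format, OF c(1) PP_edge[OF e]] by simp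
    from c(1) show "w \<in> phi V h ` e"
    proof (cases rule: PP_cases)
      case (1 u)
      then have "u \<in> e" using r by (simp add: RR_def)
      moreover have "w = phi V h u" using L1'[OF 1(1)] c 1 by simp
      ultimately show ?thesis by blast
    next
      case (2 e'')
      then show ?thesis using L2[OF 2(1)] c by auto
    qed
  qed
  ultimately show ?thesis using e' by auto
qed

lemma L4: "bij_betw (phi V h) V V"
  unfolding bij_betw_def
proof
  show "inj_on (phi V h) V"
  proof (rule inj_onI)
    fix u v assume "u \<in> V" "v \<in> V" "phi V h u = phi V h v"
    then have "h ({u}, 0) = h ({v}, 0)" using L1'[OF \<open>u \<in> V\<close>] L1'[OF \<open>v \<in> V\<close>] by simp
    then show "u = v" using h_inj[OF PP_vert[OF \<open>u \<in> V\<close>] PP_vert[OF \<open>v \<in> V\<close>]] by simp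
  qed
  show "phi V h ` V = V"
  proof
    show "phi V h ` V \<subseteq> V" using L1' by auto
    show "V \<subseteq> phi V h ` V"
    proof
      fix w assume wV: "w \<in> V"
      obtain c where c: "c \<in> PP V E" "h c = ({w}, 0)" using h_surj PP_vert[OF wV] by blast
      from c(1) show "w \<in> phi V h ` V"
      proof (cases rule: PP_cases)
        case (1 u)
        then show ?thesis using L1'[OF 1(1)] c by auto
      next
        case (2 e'')
        then show ?thesis using L2[OF 2(1)] c by auto
      qed
    qed
  qed
qed

lemma L5: "(\<lambda>e. phi V h ` e) ` E = E"
proof
  show "(\<lambda>e. phi V h ` e) ` E \<subseteq> E"
  proof
    fix x assume "x \<in> (\<lambda>e. phi V h ` e) ` E"
    then obtain e where e: "e \<in> E" "x = phi V h ` e" by blast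
    obtain e' where "e' \<in> E" "h (e, 1) = (e', 1)" using L2[OF e(1)] by blast
    then show "x \<in> E" using L3[OF e(1)] e by simp
  qed
  show "E \<subseteq> (\<lambda>e. phi V h ` e) ` E"
  proof
    fix e' assume e': "e' \<in> E"
    obtain c where c: "c \<in> PP V E" "h c = (e', 1)" using h_surj PP_edge[OF e'] by blast
    from c(1) show "e' \<in> (\<lambda>e. phi V h ` e) ` E"
    proof (cases rule: PP_cases)
      case (1 u)
      then show ?thesis using L1'[OF 1(1)] c by auto
    next
      case (2 e)
      then show ?thesis using L3[OF 2(1)] c by auto
    qed
  qed
qed

lemma phi_aut: "phi V h \<in> graph_aut V E"
proof -
  have "\<forall>x. x \<notin> V \<longrightarrow> phi V h x = x" by (simp add: phi_def)
  then have "phi V h \<in> sym_group V" unfolding sym_group_def using L4 by simp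
  then show ?thesis unfolding graph_aut_def using L5 by simp
qed

end

lemma phi_in: assumes h: "h \<in> homeo_group (alex (PP V E))" shows "phi V h \<in> graph_aut V E"
proof -
  have hb: "bij_betw h (PP V E) (PP V E)"
    and ho: "\<forall>a\<in>PP V E. \<forall>b\<in>PP V E. RR (h a) (h b) \<longleftrightarrow> RR a b" using h unfolding homeo_group_alex by auto
  show ?thesis by (rule phi_aut[OF hb ho])
qed

lemma psi_phi: assumes h: "h \<in> homeo_group (alex (PP V E))" shows "psi V E (phi V h) = h"
proof
  fix y
  have hb: "bij_betw h (PP V E) (PP V E)"
    and ho: "\<forall>a\<in>PP V E. \<forall>b\<in>PP V E. RR (h a) (h b) \<longleftrightarrow> RR a b"
    and hid: "\<forall>x. x \<notin> PP V E \<longrightarrow> h x = x" using h unfolding homeo_group_alex by auto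
  show "psi V E (phi V h) y = h y"
  proof (cases "y \<in> PP V E")
    case True
    then show ?thesis
    proof (cases rule: PP_cases)
      case (1 v) then show ?thesis using L1'[OF hb ho 1(1)] True by (simp add: psi_def)
    next
      case (2 e) then show ?thesis using L3[OF hb ho 2(1)] True by (simp add: psi_def)
    qed
  next
    case False
    then have "h y = y" using hid by blast
    then show ?thesis using False by (simp add: psi_def)
  qed
qed

lemma phi_hom: assumes h: "h \<in> homeo_group (alex (PP V E))" and k: "k \<in> homeo_group (alex (PP V E))"
  shows "phi V (h \<circ> k) = phi V h \<circ> phi V k"
proof
  fix v
  have hb: "bij_betw h (PP V E) (PP V E)"
    and ho: "\<forall>a\<in>PP V E. \<forall>b\<in>PP V E. RR (h a) (h b) \<longleftrightarrow> RR a b" using h unfolding homeo_group_alex by auto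
  have kb: "bij_betw k (PP V E) (PP V E)"
    and ko: "\<forall>a\<in>PP V E. \<forall>b\<in>PP V E. RR (k a) (k b) \<longleftrightarrow> RR a b" using k unfolding homeo_group_alex by auto
  show "phi V (h \<circ> k) v = (phi V h \<circ> phi V k) v"
  proof (cases "v \<in> V")
    case True
    have 1: "k ({v}, 0) = ({phi V k v}, 0)" "phi V k v \<in> V" using L1'[OF kb ko True] by auto
    have 2: "h ({phi V k v}, 0) = ({phi V h (phi V k v)}, 0)" using L1'[OF hb ho 1(2)] by auto
    have "phi V (h \<circ> k) v = the_elem (fst (h (k ({v}, 0))))" using True by (simp add: phi_def)
    also have "\<dots> = phi V h (phi V k v)" using 1 2 by simp
    finally show ?thesis by simp
  next
    case False then show ?thesis by (simp add: phi_def)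
  qed
qed

context
  fixes f assumes f: "f \<in> graph_aut V E"
begin

lemma f_bij: "bij_betw f V V" and f_id: "\<And>x. x \<notin> V \<Longrightarrow> f x = x"
  and f_E: "(\<lambda>e. f ` e) ` E = E"
  using f unfolding graph_aut_def sym_group_def by auto

lemma psi_in: "psi V E f \<in> homeo_group (alex (PP V E))"
  unfolding homeo_group_alex
proof (intro CollectI conjI ballI allI impI)
  have finj: "inj_on f V" and fV: "f ` V = V" using f_bij unfolding bij_betw_def by auto
  have sub: "fst y \<subseteq> V" if "y \<in> PP V E" for y
    using that
  proof (cases rule: PP_cases)
    case (1 v) then show ?thesis by simp
  next
    case (2 e) then show ?thesis using edge_props[of e] by simp
  qed
  have inP: "psi V E f y \<in> PP V E" if "y \<in> PP V E" for y
    using that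
  proof (cases rule: PP_cases)
    case (1 v)
    then have "psi V E f y = ({f v}, 0)" using that by (simp add: psi_def)
    moreover have "f v \<in> V" using fV 1 by blast
    ultimately show ?thesis using PP_vert by metis
  next
    case (2 e)
    then have "psi V E f y = (f ` e, 1)" using that by (simp add: psi_def)
    moreover have "f ` e \<in> E"
    proof -
      have "f ` e \<in> (\<lambda>e. f ` e) ` E" using 2 by blast
      then show ?thesis by (simp only: f_E)
    qed
    ultimately show ?thesis using PP_edge by metis
  qed
  show "bij_betw (psi V E f) (PP V E) (PP V E)"
    unfolding bij_betw_def
  proof
    show "inj_on (psi V E f) (PP V E)"
    proof (rule inj_onI)
      fix a b assume ab: "a \<in> PP V E" "b \<in> PP V E" "psi V E f a = psi V E f b"
      then have "(f ` fst a, snd a) = (f ` fst b, snd b)" by (simp add: psi_def)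
      then have "f ` fst a = f ` fst b" "snd a = snd b" by auto
      then have "fst a = fst b" "snd a = snd b" using inj_on_image_eq_iff[OF finj sub[OF ab(1)] sub[OF ab(2)]] by auto
      then show "a = b" by (simp add: prod_eq_iff)
    qed
    show "psi V E f ` PP V E = PP V E"
    proof
      show "psi V E f ` PP V E \<subseteq> PP V E" using inP by blast
      show "PP V E \<subseteq> psi V E f ` PP V E"
      proof
        fix y assume y: "y \<in> PP V E"
        then show "y \<in> psi V E f ` PP V E"
        proof (cases rule: PP_cases)
          case (1 w)
          then obtain v where v: "v \<in> V" "w = f v" using fV by blast
          have "psi V E f ({v}, 0) = y" using 1 v PP_vert[OF v(1)] by (simp add: psi_def)
          then show ?thesis using PP_vert[OF v(1)] by blast
        next
          case (2 e')
          then have "e' \<in> (\<lambda>e. f ` e) ` E" by (simp only: f_E)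
          then obtain e where e: "e \<in> E" "e' = f ` e" by blast
          have "psi V E f (e, 1) = y" using 2 e PP_edge[OF e(1)] by (simp add: psi_def)
          then show ?thesis using PP_edge[OF e(1)] by blast
        qed
      qed
    qed
  qed
  fix a b assume ab: "a \<in> PP V E" "b \<in> PP V E"
  have "f ` fst a \<subseteq> f ` fst b \<longleftrightarrow> fst a \<subseteq> fst b"
    using inj_on_img_sub[OF finj sub[OF ab(1)] sub[OF ab(2)]] .
  moreover have "psi V E f a = (f ` fst a, snd a)" using ab(1) by (simp add: psi_def)
  moreover have "psi V E f b = (f ` fst b, snd b)" using ab(2) by (simp add: psi_def)
  ultimately show "RR (psi V E f a) (psi V E f b) = RR a b"
    unfolding RR_def by (simp only: fst_conv snd_conv)
next
  fix x assume "x \<notin> PP V E" then show "psi V E f x = x" by (simp add: psi_def)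
qed

lemma phi_psi: "phi V (psi V E f) = f"
proof
  fix v show "phi V (psi V E f) v = f v"
  proof (cases "v \<in> V")
    case True
    then have "psi V E f ({v}, 0) = ({f v}, 0)" using PP_vert[OF True] by (simp add: psi_def)
    then show ?thesis using True by (simp add: phi_def)
  next
    case False then show ?thesis using f_id by (simp add: phi_def)
  qed
qed

end

end

lemma lqc_alex: "locally_quasi_compact (alex P)"
  unfolding locally_quasi_compact_def topspace_alex
proof
  fix x assume x: "x \<in> P"
  let ?U = "{b\<in>P. RR x b}"
  have "compactin (alex P) ?U"
    unfolding compactin_def topspace_alex
  proof (intro conjI allI impI)
    show "?U \<subseteq> P" by blast
    fix \<U> assume a: "(\<forall>U\<in>\<U>. openin (alex P) U) \<and> ?U \<subseteq> \<Union>\<U>"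
    have "x \<in> ?U" using x RR_refl by blast
    then obtain U0 where U0: "U0 \<in> \<U>" "x \<in> U0" using a by blast
    then have "?U \<subseteq> U0" using a unfolding openin_alex by blast
    then show "\<exists>\<F>. finite \<F> \<and> \<F> \<subseteq> \<U> \<and> ?U \<subseteq> \<Union>\<F>"
      using U0 by (intro exI[of _ "{U0}"]) auto
  qed
  then show "\<exists>N U. openin (alex P) U \<and> x \<in> U \<and> U \<subseteq> N \<and> compactin (alex P) N"
    using up_open[of P x] x RR_refl[of x] by blast
qed

context
  fixes V :: "'v set" and E :: "'v set set"
  assumes G: "is_graph V E"
begin

lemma card_edge: "e \<in> E \<Longrightarrow> card e = 2"
  using G unfolding is_graph_def by blast

lemma edge_PP: "(e, 1) \<in> PP V E \<Longrightarrow> e \<in> E"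
  by (erule PP_cases) auto

lemma scattered: "scattered_space (alex (PP V E))"
  unfolding scattered_space_def topspace_alex
proof (intro allI impI)
  fix S assume S: "S \<subseteq> PP V E \<and> S \<noteq> {}"
  show "\<exists>x\<in>S. \<exists>U. openin (alex (PP V E)) U \<and> U \<inter> S = {x}"
  proof (cases "\<exists>e. (e, 1) \<in> S")
    case True
    then obtain e where eS: "(e, 1) \<in> S" by blast
    then have eE: "e \<in> E" using S edge_PP by blast
    have "openin (alex (PP V E)) {(e, 1)}"
      unfolding openin_alex
    proof (intro conjI ballI impI)
      show "{(e, 1)} \<subseteq> PP V E" using eS S by blast
      fix a b assume a: "a \<in> {(e, 1)}" and b: "b \<in> PP V E" and r: "RR a b"
      from b show "b \<in> {(e, 1)}"
      proof (cases rule: PP_cases)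
        case (1 v) then show ?thesis using a r by (simp add: RR_def)
      next
        case (2 e')
        then have "e \<subseteq> e'" using a r by (simp add: RR_def)
        moreover have "finite e'" using edge_props[OF G 2(1)] by blast
        moreover have "card e = card e'" using card_edge[OF eE] card_edge[OF 2(1)] by simp
        ultimately have "e = e'" using card_subset_eq by blast
        then show ?thesis using 2 by simp
      qed
    qed
    then show ?thesis using eS by blast
  next
    case False
    obtain a where aS: "a \<in> S" using S by blast
    then have "a \<in> PP V E" using S by blast
    then obtain v where v: "v \<in> V" "a = ({v}, 0)"
    proof (cases rule: PP_cases)
      case (2 e) then show ?thesis using False aS by blast
    qed
    have "{b\<in>PP V E. RR a b} \<inter> S = {a}"
    proof
      show "{a} \<subseteq> {b\<in>PP V E. RR a b} \<inter> S" using aS S RR_refl by blast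
      show "{b\<in>PP V E. RR a b} \<inter> S \<subseteq> {a}"
      proof
        fix b assume b: "b \<in> {b\<in>PP V E. RR a b} \<inter> S"
        then have "b \<in> PP V E" by blast
        then show "b \<in> {a}"
        proof (cases rule: PP_cases)
          case (1 w) then show ?thesis using b v by (simp add: RR_def)
        next
          case (2 e) then show ?thesis using b False by blast
        qed
      qed
    qed
    then show ?thesis using up_open[of "PP V E" a] aS by blast
  qed
qed

lemma not_T1: "\<not> singletons_closed (alex (PP V E))"
proof
  assume T1: "singletons_closed (alex (PP V E))"
  obtain e where e: "e \<in> E" using G unfolding is_graph_def by auto
  obtain u where u: "u \<in> e" using edge_ne[OF G e] by blast
  have uV: "u \<in> V" using edge_props[OF G e] u by blast
  have "closedin (alex (PP V E)) {(e, 1)}"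
    using T1 PP_edge[OF e] unfolding singletons_closed_def topspace_alex by blast
  then have o: "openin (alex (PP V E)) (PP V E - {(e, 1)})"
    unfolding closedin_def topspace_alex by blast
  have "({u}, 0) \<in> PP V E - {(e, 1)}" using PP_vert[OF uV] by simp
  moreover have "RR ({u}, 0) (e, 1)" using u by (simp add: RR_def)
  ultimately have "(e, 1) \<in> PP V E - {(e, 1)}"
    using o PP_edge[OF e] unfolding openin_alex by blast
  then show False by simp
qed

lemma not_zd: "\<not> zero_dimensional (alex (PP V E))"
proof
  assume "zero_dimensional (alex (PP V E))"
  then obtain \<B> where B1: "\<forall>B\<in>\<B>. openin (alex (PP V E)) B \<and> closedin (alex (PP V E)) B"
    and B2: "\<forall>U. openin (alex (PP V E)) U \<longrightarrow> (\<exists>\<U>. \<U> \<subseteq> \<B> \<and> \<Union>\<U> = U)"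
    unfolding zero_dimensional_def by blast
  obtain e where e: "e \<in> E" using G unfolding is_graph_def by auto
  obtain x y where xy: "e = {x, y}" "x \<noteq> y" using edge_props[OF G e] by blast
  have "e \<subseteq> V" using edge_props[OF G e] by blast
  then have xV: "x \<in> V" and yV: "y \<in> V" using xy by auto
  let ?U = "{b\<in>PP V E. RR ({x}, 0) b}"
  have "\<exists>\<U>. \<U> \<subseteq> \<B> \<and> \<Union>\<U> = ?U" 
    by (rule mp[OF spec[OF B2, of ?U] up_open[of "PP V E" "({x}, 0)"]])
  then obtain \<U> where U0: "\<U> \<subseteq> \<B> \<and> \<Union>\<U> = ?U" by (rule exE)
  have U: "\<U> \<subseteq> \<B>" "\<Union>\<U> = ?U" using U0 by (rule conjunct1, rule conjunct2)
  have "({x}, 0) \<in> ?U" using PP_vert[OF xV] RR_refl by blast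
  then have "({x}, 0) \<in> \<Union>\<U>" using U(2) by simp
  then obtain B where B: "B \<in> \<U>" "({x}, 0) \<in> B" by (rule UnionE)
  have "B \<in> \<B>" using B(1) U(1) by blast
  then have Bo: "openin (alex (PP V E)) B" and Bc: "closedin (alex (PP V E)) B" using B1 by blast+
  have "RR ({x}, 0) (e, 1)" using xy by (simp add: RR_def)
  then have eB: "(e, 1) \<in> B" using Bo B PP_edge[OF e] unfolding openin_alex by blast
  have "({y}, 0) \<notin> ?U" using xy by (simp add: RR_def)
  moreover have "B \<subseteq> ?U" using Union_upper[OF B(1)] U(2) by simp
  ultimately have "({y}, 0) \<notin> B" by blast
  then have yB: "({y}, 0) \<in> PP V E - B" using PP_vert[OF yV] by blast
  have o: "openin (alex (PP V E)) (PP V E - B)" using Bc unfolding closedin_def topspace_alex by blast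
  have "RR ({y}, 0) (e, 1)" using xy by (simp add: RR_def)
  then have "(e, 1) \<in> PP V E - B" using o yB PP_edge[OF e] unfolding openin_alex by blast
  then show False using eB by blast
qed

end

theorem proposition24:
  fixes V :: "'v set" and E :: "'v set set"
  assumes "is_graph V E"
  shows "\<exists>X :: ('v set \<times> nat) topology.
           scattered_space X \<and> locally_quasi_compact X \<and>
           \<not> singletons_closed X \<and> \<not> zero_dimensional X \<and>
           (\<exists>\<phi>. top_group_iso (homeo_group X) (pointwise_topology (topspace X) (homeo_group X))
                   (graph_aut V E) (pointwise_topology V (graph_aut V E)) \<phi>)"
proof (rule exI[of _ "alex (PP V E)"], intro conjI)
  let ?X = "alex (PP V E)"
  let ?H = "homeo_group ?X"
  let ?A = "graph_aut V E"
  note G = assms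
  show "scattered_space ?X" by (rule scattered[OF G])
  show "locally_quasi_compact ?X" by (rule lqc_alex)
  show "\<not> singletons_closed ?X" by (rule not_T1[OF G])
  show "\<not> zero_dimensional ?X" by (rule not_zd[OF G])
  have c1: "continuous_map (pointwise_topology (PP V E) ?H) (pointwise_topology V ?A) (phi V)"
  proof (rule cont_pointwise)
    show "\<forall>g\<in>?H. phi V g \<in> ?A" using phi_in[OF G] by blast
    show "\<forall>g\<in>?H. \<forall>y\<in>V. \<exists>F. finite F \<and> F \<subseteq> PP V E \<and>
            (\<forall>h\<in>?H. (\<forall>x\<in>F. h x = g x) \<longrightarrow> phi V h y = phi V g y)"
    proof (intro ballI)
      fix g y assume "g \<in> ?H" "y \<in> V"
      show "\<exists>F. finite F \<and> F \<subseteq> PP V E \<and>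
            (\<forall>h\<in>?H. (\<forall>x\<in>F. h x = g x) \<longrightarrow> phi V h y = phi V g y)"
      proof (intro exI[of _ "{({y}, 0)}"] conjI)
        show "{({y}, 0)} \<subseteq> PP V E" using PP_vert[OF \<open>y \<in> V\<close>] by simp
        show "\<forall>h\<in>?H. (\<forall>x\<in>{({y}, 0)}. h x = g x) \<longrightarrow> phi V h y = phi V g y"
        proof (intro ballI impI)
          fix h assume "\<forall>x\<in>{({y}, 0)}. h x = g x"
          then have "h ({y}, 0) = g ({y}, 0)" by simp
          then show "phi V h y = phi V g y" by (simp add: phi_def)
        qed
      qed simp
    qed
  qed
  have c2: "continuous_map (pointwise_topology V ?A) (pointwise_topology (PP V E) ?H) (psi V E)"
  proof (rule cont_pointwise)
    show "\<forall>g\<in>?A. psi V E g \<in> ?H" using psi_in[OF G] by blast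
    show "\<forall>g\<in>?A. \<forall>y\<in>PP V E. \<exists>F. finite F \<and> F \<subseteq> V \<and>
            (\<forall>h\<in>?A. (\<forall>x\<in>F. h x = g x) \<longrightarrow> psi V E h y = psi V E g y)"
    proof (intro ballI)
      fix g y assume "g \<in> ?A" and y: "y \<in> PP V E"
      have fy: "finite (fst y) \<and> fst y \<subseteq> V"
        using y
      proof (cases rule: PP_cases)
        case (1 v) then show ?thesis by simp
      next
        case (2 e) then show ?thesis using edge_props[OF G 2(1)] by simp
      qed
      have "\<forall>h\<in>?A. (\<forall>x\<in>fst y. h x = g x) \<longrightarrow> psi V E h y = psi V E g y"
      proof (intro ballI impI)
        fix h assume "\<forall>x\<in>fst y. h x = g x"
        then have "h ` fst y = g ` fst y" using image_cong[of "fst y" "fst y" h g] by blast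
        then show "psi V E h y = psi V E g y" by (simp add: psi_def)
      qed
      then show "\<exists>F. finite F \<and> F \<subseteq> V \<and>
            (\<forall>h\<in>?A. (\<forall>x\<in>F. h x = g x) \<longrightarrow> psi V E h y = psi V E g y)"
        using fy by blast
    qed
  qed
  have lr: "\<forall>h\<in>?H. psi V E (phi V h) = h" using psi_phi[OF G] by blast
  have rl: "\<forall>f\<in>?A. phi V (psi V E f) = f" using phi_psi[OF G] by blast
  show "\<exists>\<phi>. top_group_iso ?H (pointwise_topology (topspace ?X) ?H) ?A (pointwise_topology V ?A) \<phi>"
    unfolding top_group_iso_def topspace_alex
  proof (intro exI conjI ballI)
    show "bij_betw (phi V) ?H ?A"
    proof (rule bij_betw_byWitness[where f'="psi V E"])
      show "\<forall>a\<in>?H. psi V E (phi V a) = a" by (rule lr)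
      show "\<forall>a\<in>?A. phi V (psi V E a) = a" by (rule rl)
      show "phi V ` ?H \<subseteq> ?A" using phi_in[OF G] by blast
      show "psi V E ` ?A \<subseteq> ?H" using psi_in[OF G] by blast
    qed
    show "phi V (f \<circ> g) = phi V f \<circ> phi V g" if "f \<in> ?H" "g \<in> ?H" for f g
      by (rule phi_hom[OF G that])
    have "homeomorphic_maps (pointwise_topology (PP V E) ?H) (pointwise_topology V ?A) (phi V) (psi V E)"
      unfolding homeomorphic_maps_def topspace_pointwise using c1 c2 lr rl by blast
    then show "homeomorphic_map (pointwise_topology (PP V E) ?H) (pointwise_topology V ?A) (phi V)"
      using homeomorphic_map_maps by blast
  qed
qed

end
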